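(* Fix $\epsilon \in (0,0.1)$. Let $G_0\subset\mathbb{R}^2$ be the unit grid (union of the lines $x_1=k$, $x_2=k$, $k\in\mathbb{Z}$), $B(\epsilon)$ the Euclidean $\epsilon$-neighbourhood of $\mathbb{Z}^2$, and $G_\epsilon = (G_0 \setminus B(\epsilon)) \cup \partial B(\epsilon)$. Put $P_1=(0,-\epsilon)$, $P_2=(0,1-\epsilon)$, $P_3=(1,-\epsilon)$, $E_1=(-\epsilon,0)$, $E_2=(1-\epsilon,0)$, $L=(\epsilon,0)$, $M=(0,\epsilon)$. Consider the following paths in $G_\epsilon$: $a$ goes from $P_1$ along the circle $|x|=\epsilon$ through $E_1$ to $M$ (clockwise), then along the vertical grid segment to $P_2$; $b$ goes from $P_1$ along the circle $|x|=\epsilon$ to $L$ (counterclockwise quarter arc), then along the horizontal grid segment to $E_2$, then along the circle $|x-(1,0)|=\epsilon$ (clockwise quarter arc) to $P_3$; $c$ is the loop from $P_1$ once counterclockwise around the circle $|x|=\epsilon$ through $L, M, E_1$ back to $P_1$. Their projections to $G_\epsilon/\mathbb{Z}^2$ are loops generating $\pi_1(G_\epsilon/\mathbb{Z}^2, P_1)$, identified with the free group $\mathbb{F}_3=\langle a,b,c\rangle$. Let $r = aba^{-1}b^{-1}c$ and let $N$ be its normal closure in $\mathbb{F}_3$. For $w \in N$, let $\gamma'(w)$ be the closed curve in $G_\epsilon$ starting at $P_1$ obtained by lifting the loop $w$, and let $\gamma(w)$ be a geometrically irreducible cycle in $G_\epsilon$ freely homotopic in $G_\epsilon$ to $\gamma'(w)$.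 Then for every cyclically reduced word $w \in N$, $$l(w) \leq (1-2\epsilon)^{-1}\,\mathrm{Length}(\gamma(w)),$$ where $l(w)$ is the number of occurrences of the letters $a^{\pm1}, b^{\pm1}$ in $w$ and $\mathrm{Length}$ is Euclidean length.
   Context: A 1-cycle on $G_\epsilon$ is geometrically irreducible if it has no pair of consecutive edges which coincide but have opposite orientations. Elements of $N$ lie in the kernel of the homomorphism $\mathbb{F}_3\to\mathbb{Z}^2$ sending $a\mapsto(0,1)$, $b\mapsto(1,0)$, $c\mapsto 0$, so their lifts to $G_\epsilon$ are closed. *)

theory Defs
  imports Complex_Main
begin

section \<open>The graph G_eps (combinatorial model)\<close>

text \<open>Vertices of G_eps: the points p + eps*(direction) on the circle of radius eps around
a lattice point p, where the direction is right (R), up (U), left (Lf) or down (D).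
E.g. P1 = ((0,0),D), L = ((0,0),R), M = ((0,0),U), E1 = ((0,0),Lf).\<close>

datatype dir = R | U | Lf | D

fun ccw :: "dir \<Rightarrow> dir" where
  "ccw R = U" | "ccw U = Lf" | "ccw Lf = D" | "ccw D = R"

type_synonym pt = "int \<times> int"
type_synonym vert = "pt \<times> dir"

definition padd :: "pt \<Rightarrow> pt \<Rightarrow> pt" where
  "padd p q = (fst p + fst q, snd p + snd q)"

definition psub :: "pt \<Rightarrow> pt \<Rightarrow> pt" where
  "psub p q = (fst p - fst q, snd p - snd q)"

text \<open>Edges of G_eps:
  Arc p d  : the quarter arc of the circle |x - p| = eps from vertex (p,d) counterclockwise to (p, ccw d);
  HSeg p   : the horizontal grid segment from (p,R) to (p+(1,0),Lf);
  VSeg p   : the vertical grid segment from (p,U) to (p+(0,1),D).\<close>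

datatype edge = Arc pt dir | HSeg pt | VSeg pt

fun esrc :: "edge \<Rightarrow> vert" where
  "esrc (Arc p d) = (p, d)"
| "esrc (HSeg p) = (p, R)"
| "esrc (VSeg p) = (p, U)"

fun etgt :: "edge \<Rightarrow> vert" where
  "etgt (Arc p d) = (p, ccw d)"
| "etgt (HSeg p) = (padd p (1,0), Lf)"
| "etgt (VSeg p) = (padd p (0,1), D)"

fun elen :: "real \<Rightarrow> edge \<Rightarrow> real" where
  "elen eps (Arc p d) = eps * pi / 2"
| "elen eps (HSeg p) = 1 - 2 * eps"
| "elen eps (VSeg p) = 1 - 2 * eps"

fun etrans :: "pt \<Rightarrow> edge \<Rightarrow> edge" where
  "etrans v (Arc p d) = Arc (padd v p) d"
| "etrans v (HSeg p) = HSeg (padd v p)"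
| "etrans v (VSeg p) = VSeg (padd v p)"

text \<open>Oriented edges: True = standard orientation (esrc to etgt), False = reversed.\<close>
type_synonym dedge = "edge \<times> bool"

definition dtail :: "dedge \<Rightarrow> vert" where
  "dtail e = (if snd e then esrc (fst e) else etgt (fst e))"

definition dhead :: "dedge \<Rightarrow> vert" where
  "dhead e = (if snd e then etgt (fst e) else esrc (fst e))"

definition flip :: "dedge \<Rightarrow> dedge" where
  "flip e = (fst e, \<not> snd e)"

definition inv_path :: "dedge list \<Rightarrow> dedge list" where
  "inv_path xs = rev (map flip xs)"

definition trans_path :: "pt \<Rightarrow> dedge list \<Rightarrow> dedge list" where
  "trans_path v xs = map (\<lambda>(e, b). (etrans v e, b)) xs"

definition closed_edge_path :: "dedge list \<Rightarrow> bool" where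
  "closed_edge_path xs \<longleftrightarrow>
     (\<forall>i. Suc i < length xs \<longrightarrow> dhead (xs ! i) = dtail (xs ! Suc i)) \<and>
     (xs \<noteq> [] \<longrightarrow> dhead (last xs) = dtail (hd xs))"

definition geom_irreducible :: "dedge list \<Rightarrow> bool" where
  "geom_irreducible xs \<longleftrightarrow>
     (\<forall>i. Suc i < length xs \<longrightarrow> xs ! Suc i \<noteq> flip (xs ! i)) \<and>
     (xs \<noteq> [] \<longrightarrow> hd xs \<noteq> flip (last xs))"

definition path_len :: "real \<Rightarrow> dedge list \<Rightarrow> real" where
  "path_len eps xs = (\<Sum>e\<leftarrow>xs. elen eps (fst e))"

inductive fh_step :: "dedge list \<Rightarrow> dedge list \<Rightarrow> bool" where
  rotate: "closed_edge_path (xs @ ys) \<Longrightarrow> fh_step (xs @ ys) (ys @ xs)"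
| backtrack: "closed_edge_path (xs @ ys) \<Longrightarrow> closed_edge_path (xs @ [e, flip e] @ ys) \<Longrightarrow>
     fh_step (xs @ ys) (xs @ [e, flip e] @ ys)"

definition freely_homotopic :: "dedge list \<Rightarrow> dedge list \<Rightarrow> bool" where
  "freely_homotopic p q \<longleftrightarrow> closed_edge_path p \<and> closed_edge_path q \<and>
     (\<lambda>x y. fh_step x y \<or> fh_step y x)\<^sup>*\<^sup>* p q"

section \<open>The free group F_3 = <a,b,c> as reduced words\<close>

datatype gen = A | B | C

type_synonym letter = "gen \<times> bool"   \<comment> \<open>True: g, False: g^{-1}\<close>

definition inv_letter :: "letter \<Rightarrow> letter" where
  "inv_letter x = (fst x, \<not> snd x)"

definition inv_word :: "letter list \<Rightarrow> letter list" where
  "inv_word w = rev (map inv_letter w)"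

fun red :: "letter list \<Rightarrow> letter list" where
  "red [] = []"
| "red (x # xs) = (case red xs of [] \<Rightarrow> [x] | y # ys \<Rightarrow> if y = inv_letter x then ys else x # y # ys)"

definition reduced :: "letter list \<Rightarrow> bool" where
  "reduced w \<longleftrightarrow> (\<forall>i. Suc i < length w \<longrightarrow> w ! Suc i \<noteq> inv_letter (w ! i))"

definition cyc_reduced :: "letter list \<Rightarrow> bool" where
  "cyc_reduced w \<longleftrightarrow> reduced w \<and> (w \<noteq> [] \<longrightarrow> hd w \<noteq> inv_letter (last w))"

definition rel_r :: "letter list" where
  "rel_r = [(A, True), (B, True), (A, False), (B, False), (C, True)]"

definition N :: "letter list set" where
  "N = { red (concat (map (\<lambda>(u, s). u @ (if s then rel_r else inv_word rel_r) @ inv_word u) cs))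
         | cs. True }"

definition ell :: "letter list \<Rightarrow> nat" where
  "ell w = length (filter (\<lambda>x. fst x \<noteq> C) w)"

fun gen_path :: "gen \<Rightarrow> dedge list" where
  "gen_path A = [(Arc (0,0) Lf, False), (Arc (0,0) U, False), (VSeg (0,0), True)]"
| "gen_path B = [(Arc (0,0) D, True), (HSeg (0,0), True), (Arc (1,0) Lf, True)]"
| "gen_path C = [(Arc (0,0) D, True), (Arc (0,0) R, True), (Arc (0,0) U, True), (Arc (0,0) Lf, True)]"

fun disp :: "gen \<Rightarrow> pt" where
  "disp A = (0, 1)" | "disp B = (1, 0)" | "disp C = (0, 0)"

fun lift_from :: "pt \<Rightarrow> letter list \<Rightarrow> dedge list" where
  "lift_from p [] = []"
| "lift_from p (x # w) =
     (if snd x then trans_path p (gen_path (fst x)) @ lift_from (padd p (disp (fst x))) w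
      else trans_path (psub p (disp (fst x))) (inv_path (gen_path (fst x)))
             @ lift_from (psub p (disp (fst x))) w)"

definition lift :: "letter list \<Rightarrow> dedge list" where
  "lift w = lift_from (0, 0) w"

end

theory Submission
  imports Defs
begin


lemma flip_flip[simp]: "flip (flip e) = e" by (simp add: flip_def)
lemma flip_neq[simp]: "flip e \<noteq> e" by (cases e) (simp add: flip_def)
lemma flip_inj[simp]: "(flip a = flip b) = (a = b)" by (metis flip_flip)

definition rot :: "dedge list \<Rightarrow> dedge list \<Rightarrow> bool" where
  "rot l l' \<longleftrightarrow> (\<exists>k. l' = rotate k l)"
definition cstep :: "dedge list \<Rightarrow> dedge list \<Rightarrow> bool" where
  "cstep l l' \<longleftrightarrow> (\<exists>k e. rotate k l = e # flip e # l')"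
definition irred :: "dedge list \<Rightarrow> bool" where
  "irred l \<longleftrightarrow> \<not> (\<exists>l'. cstep l l')"

lemma rot_refl: "rot l l" unfolding rot_def by (rule exI[of _ 0]) simp
lemma rot_trans: "rot a b \<Longrightarrow> rot b c \<Longrightarrow> rot a c"
  unfolding rot_def by (metis rotate_rotate)
lemma rot_sym: assumes "rot a b" shows "rot b a"
proof -
  obtain j where b: "b = rotate j a" using assms rot_def by auto
  let ?n = "length a"
  have "rotate (?n - j mod ?n) b = rotate (?n - j mod ?n + j) a" by (simp add: b rotate_rotate)
  also have "\<dots> = a"
  proof (cases "?n = 0")
    case True then show ?thesis by simp
  next
    case False
    have "(?n - j mod ?n + j) mod ?n = 0"
      by (metis False add.commute le_add_diff_inverse2 mod_add_left_eq mod_less_divisor mod_self nat_less_le neq0_conv)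
    then show ?thesis by (rule rotate_id)
  qed
  finally show ?thesis unfolding rot_def by metis
qed
lemma rot_app: "rot (xs @ ys) (ys @ xs)"
  unfolding rot_def by (metis rotate_append)

lemma cstep_length: "cstep l l' \<Longrightarrow> length l = Suc (Suc (length l'))"
  unfolding cstep_def by (metis length_Cons length_rotate)

lemma cstep_rot: assumes "rot l l2" "cstep l m" shows "cstep l2 m"
proof -
  obtain j where l: "l = rotate j l2" using rot_sym[OF assms(1)] rot_def by auto
  obtain k e where "rotate k l = e # flip e # m" using assms(2) cstep_def by auto
  then have "rotate (k + j) l2 = e # flip e # m" by (simp add: l rotate_rotate)
  then show ?thesis unfolding cstep_def by blast
qed

lemma irred_rot: "rot l l2 \<Longrightarrow> irred l \<Longrightarrow> irred l2"
  unfolding irred_def using cstep_rot rot_sym by blast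

lemma cstep_app: "cstep (xs @ [e, flip e] @ ys) (ys @ xs)"
  unfolding cstep_def by (rule exI[of _ "length xs"], rule exI[of _ e]) (metis append_Cons append_Nil rotate_append)

lemma LC_AB:
  assumes h1: "XA @ XB = g # flip g # l2" and h2: "XB @ XA = e # flip e # l1"
  shows "rot l1 l2 \<or> (\<exists>l3 l4. cstep l1 l3 \<and> cstep l2 l4 \<and> rot l3 l4)"
proof -
  consider "XA = []" | "XB = []" | a where "XA = [a]" | b where "XB = [b]"
    | a1 a2 T b1 b2 DD where "XA = a1 # a2 # T" "XB = b1 # b2 # DD"
    by (metis list.exhaust)
  then show ?thesis
  proof cases
    case 1 then show ?thesis using h1 h2 by (simp add: rot_refl)
  next
    case 2 then show ?thesis using h1 h2 by (simp add: rot_refl)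
  next
    case (3 a)
    then have a: "a = g" and XB: "XB = flip g # l2" using h1 by auto
    with h2 3 have e: "e = flip g" and l2g: "l2 @ [g] = g # l1" by auto
    show ?thesis
    proof (cases l2)
      case Nil then show ?thesis using l2g by (simp add: rot_refl)
    next
      case (Cons h l2')
      then have "h = g" "l1 = l2' @ [g]" using l2g by auto
      then have "rot l2 l1" using Cons rot_app[of "[g]" l2'] by simp
      then show ?thesis using rot_sym by blast
    qed
  next
    case (4 b)
    then have XA: "XA = flip e # l1" and b: "b = e" using h2 by auto
    with h1 4 have g: "g = flip e" and l1e: "l1 @ [e] = e # l2" by auto
    show ?thesis
    proof (cases l1)
      case Nil then show ?thesis using l1e by (simp add: rot_refl)
    next
      case (Cons h l1')
      then have "h = e" "l2 = l1' @ [e]" using l1e by auto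
      then have "rot l1 l2" using Cons rot_app[of "[e]" l1'] by simp
      then show ?thesis by blast
    qed
  next
    case (5 a1 a2 T b1 b2 DD)
    then have "a1 = g" "a2 = flip g" "l2 = T @ XB" "b1 = e" "b2 = flip e" "l1 = DD @ XA"
      using h1 h2 by auto
    with 5 have L1: "l1 = DD @ [g, flip g] @ T" and L2: "l2 = T @ [e, flip e] @ DD" by auto
    have "cstep l1 (T @ DD)" using L1 cstep_app by simp
    moreover have "cstep l2 (DD @ T)" using L2 cstep_app by simp
    moreover have "rot (T @ DD) (DD @ T)" by (rule rot_app)
    ultimately show ?thesis by blast
  qed
qed

lemma local_conf:
  assumes "cstep l l1" "cstep l l2"
  shows "rot l1 l2 \<or> (\<exists>l3 l4. cstep l1 l3 \<and> cstep l2 l4 \<and> rot l3 l4)"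
proof -
  obtain k1 e where h1: "rotate k1 l = e # flip e # l1" using assms(1) cstep_def by auto
  obtain k2 g where h2: "rotate k2 l = g # flip g # l2" using assms(2) cstep_def by auto
  define t where "t = rotate k2 l"
  obtain j where lt: "l = rotate j t" using rot_sym[of l t] unfolding rot_def t_def by auto
  define m where "m = (k1 + j) mod length t"
  have "rotate k1 l = rotate (k1 + j) t" unfolding lt by (simp add: rotate_rotate)
  then have "rotate k1 l = drop m t @ take m t" unfolding m_def using rotate_drop_take[of "k1+j" t] by simp
  then have "drop m t @ take m t = e # flip e # l1" using h1 by simp
  moreover have "take m t @ drop m t = g # flip g # l2" using h2 t_def by simp
  ultimately show ?thesis using LC_AB by blast
qed

lemma rtc_rot:
  assumes "cstep\<^sup>*\<^sup>* l n" "rot l l'"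
  shows "\<exists>n'. cstep\<^sup>*\<^sup>* l' n' \<and> rot n n'"
  using assms(1)
proof (cases rule: converse_rtranclpE)
  case base then show ?thesis using assms(2) by blast
next
  case (step m)
  then have "cstep l' m" using cstep_rot assms(2) by blast
  then show ?thesis using step by (meson converse_rtranclp_into_rtranclp rot_refl)
qed

lemma exists_nf: "\<exists>n. cstep\<^sup>*\<^sup>* l n \<and> irred n"
proof (induction "length l" arbitrary: l rule: less_induct)
  case less
  show ?case
  proof (cases "irred l")
    case True then show ?thesis by blast
  next
    case False
    then obtain l' where s: "cstep l l'" unfolding irred_def by blast
    then have "length l' < length l" using cstep_length by fastforce
    then obtain n where "cstep\<^sup>*\<^sup>* l' n" "irred n" using less by blast
    then show ?thesis using s by (meson converse_rtranclp_into_rtranclp)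
  qed
qed

lemma nf_unique:
  assumes "cstep\<^sup>*\<^sup>* l n1" "irred n1" "cstep\<^sup>*\<^sup>* l n2" "irred n2"
  shows "rot n1 n2"
  using assms
proof (induction "length l" arbitrary: l n1 n2 rule: less_induct)
  case less
  show ?case
  proof (cases "l = n1")
    case True
    then have "irred l" using less by simp
    then have "l = n2" using less(4) by (metis converse_rtranclpE irred_def)
    then show ?thesis using True rot_refl by simp
  next
    case False
    then obtain l1 where s1: "cstep l l1" "cstep\<^sup>*\<^sup>* l1 n1" using less(2) by (metis converse_rtranclpE)
    then have "\<not> irred l" unfolding irred_def by blast
    then have "l \<noteq> n2" using less by blast
    then obtain l2 where s2: "cstep l l2" "cstep\<^sup>*\<^sup>* l2 n2" using less(4) by (metis converse_rtranclpE)
    have len1: "length l1 < length l" using s1 cstep_length by fastforce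
    have len2: "length l2 < length l" using s2 cstep_length by fastforce
    from local_conf[OF s1(1) s2(1)] show ?thesis
    proof
      assume r: "rot l1 l2"
      obtain n2' where a: "cstep\<^sup>*\<^sup>* l1 n2'" "rot n2 n2'" using rtc_rot[OF s2(2) rot_sym[OF r]] by blast
      have "irred n2'" using a(2) less(5) irred_rot by blast
      then have "rot n1 n2'" using less(1)[OF len1 s1(2) less(3) a(1)] by blast
      then show ?thesis using a(2) rot_sym rot_trans by blast
    next
      assume "\<exists>l3 l4. cstep l1 l3 \<and> cstep l2 l4 \<and> rot l3 l4"
      then obtain l3 l4 where c: "cstep l1 l3" "cstep l2 l4" "rot l3 l4" by blast
      obtain n3 where n3: "cstep\<^sup>*\<^sup>* l3 n3" "irred n3" using exists_nf by blast
      have "rot n1 n3" using less(1)[OF len1 s1(2) less(3)] c(1) n3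
        by (meson converse_rtranclp_into_rtranclp)
      obtain n3' where b: "cstep\<^sup>*\<^sup>* l4 n3'" "rot n3 n3'" using rtc_rot[OF n3(1) c(3)] by blast
      have "irred n3'" using b(2) n3(2) irred_rot by blast
      then have "rot n3' n2" using less(1)[OF len2 _ _ s2(2) less(5)] b(1) c(2)
        by (meson converse_rtranclp_into_rtranclp)
      then show ?thesis using \<open>rot n1 n3\<close> b(2) rot_trans by blast
    qed
  qed
qed

lemma fh_nf:
  assumes "(\<lambda>x y. fh_step x y \<or> fh_step y x)\<^sup>*\<^sup>* \<gamma> l" "irred \<gamma>"
  shows "\<exists>n. cstep\<^sup>*\<^sup>* l n \<and> irred n \<and> rot n \<gamma>"
  using assms(1)
proof (induction rule: rtranclp_induct)
  case base then show ?case using assms(2) rot_refl by blast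
next
  case (step l l')
  then obtain n where n: "cstep\<^sup>*\<^sup>* l n" "irred n" "rot n \<gamma>" by blast
  have rotcase: ?case if rl: "rot l l'"
  proof -
    obtain n' where "cstep\<^sup>*\<^sup>* l' n'" "rot n n'" using rtc_rot[OF n(1) rl] by blast
    then show ?thesis using n irred_rot rot_sym rot_trans by blast
  qed
  from step(2) show ?case
  proof
    assume "fh_step l l'"
    then show ?case
    proof cases
      case (rotate xs ys) then show ?thesis using rotcase rot_app by blast
    next
      case (backtrack xs ys e)
      obtain n' where a: "cstep\<^sup>*\<^sup>* (ys @ xs) n'" "rot n n'" using rtc_rot[OF n(1)] backtrack rot_app by blast
      have "cstep l' (ys @ xs)" using backtrack cstep_app by simp
      then show ?thesis using a n irred_rot rot_sym rot_trans
        by (meson converse_rtranclp_into_rtranclp)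
    qed
  next
    assume "fh_step l' l"
    then show ?case
    proof cases
      case (rotate xs ys) then show ?thesis using rotcase rot_app rot_sym by blast
    next
      case (backtrack xs ys e)
      obtain n' where n': "cstep\<^sup>*\<^sup>* l' n'" "irred n'" using exists_nf by blast
      obtain n'' where a: "cstep\<^sup>*\<^sup>* (ys @ xs) n''" "rot n' n''" using rtc_rot[OF n'(1)] backtrack rot_app by blast
      have "cstep l (ys @ xs)" using backtrack cstep_app by simp
      then have "cstep\<^sup>*\<^sup>* l n''" using a by (meson converse_rtranclp_into_rtranclp)
      moreover have "irred n''" using a(2) n'(2) irred_rot by blast
      ultimately have "rot n n''" using nf_unique n by blast
      then have "rot n' \<gamma>" using a(2) n(3) rot_sym rot_trans by blast
      then show ?thesis using n' by blast
    qed
  qed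
qed



definition isseg :: "dedge \<Rightarrow> bool" where
  "isseg e = (case fst e of Arc p d \<Rightarrow> False | _ \<Rightarrow> True)"
definition sg :: "dedge \<Rightarrow> int" where "sg e = (if snd e then 1 else -1)"
definition nseg :: "dedge list \<Rightarrow> nat" where "nseg l = length (filter isseg l)"

lemma isseg_flip[simp]: "isseg (flip e) = isseg e" by (simp add: isseg_def flip_def)
lemma sg_flip[simp]: "sg (flip e) = - sg e" by (simp add: sg_def flip_def)

definition bad :: "dedge list \<Rightarrow> bool" where
  "bad l \<longleftrightarrow> (\<exists>Us s M V. l = Us @ [s] @ M @ [flip s] @ V \<and> isseg s \<and>
      (\<forall>m\<in>set M. \<not> isseg m) \<and> sum_list (map sg M) = 0)"
definition PP :: "dedge list \<Rightarrow> bool" where "PP l \<longleftrightarrow> (\<forall>k. \<not> bad (rotate k l))"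

lemma bad_insert:
  assumes "bad (u @ v)" "\<not> isseg e"
  shows "bad (u @ [e, flip e] @ v)"
proof -
  obtain Us s M V where h: "u @ v = Us @ [s] @ M @ [flip s] @ V" "isseg s"
    "\<forall>m\<in>set M. \<not> isseg m" "sum_list (map sg M) = 0"
    using assms(1) bad_def by auto
  have ins: "bad (Us @ [s] @ M' @ [flip s] @ V)" if "\<forall>m\<in>set M'. \<not> isseg m" "sum_list (map sg M') = 0" for M'
    unfolding bad_def using that h(2) by blast
  have ins2: "bad (Us' @ [s] @ M @ [flip s] @ V')" for Us' V'
    unfolding bad_def using h by blast
  from h(1) have "(\<exists>us. u = Us @ us \<and> us @ v = s # M @ flip s # V) \<or> (\<exists>us. u @ us = Us \<and> v = us @ s # M @ flip s # V)"
    using append_eq_append_conv2[of u v Us "s # M @ flip s # V"] by auto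
  then show ?thesis
  proof
    assume "\<exists>us. u = Us @ us \<and> us @ v = s # M @ flip s # V"
    then obtain us where u: "u = Us @ us" and us: "us @ v = s # M @ flip s # V" by blast
    show ?thesis
    proof (cases us)
      case Nil
      then show ?thesis using u us ins2[of "Us @ [e, flip e]" V] by simp
    next
      case (Cons s' us')
      then have s': "s' = s" and us': "us' @ v = M @ flip s # V" using us by auto
      then have "(\<exists>ws. us' = M @ ws \<and> ws @ v = flip s # V) \<or> (\<exists>ws. us' @ ws = M \<and> v = ws @ flip s # V)"
        using append_eq_append_conv2[of us' v M "flip s # V"] by auto
      then show ?thesis
      proof
        assume "\<exists>ws. us' = M @ ws \<and> ws @ v = flip s # V"
        then obtain ws where ws: "us' = M @ ws" "ws @ v = flip s # V" by blast
        show ?thesis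
        proof (cases ws)
          case Nil
          then show ?thesis using ins[of "M @ [e, flip e]"] u Cons s' ws h assms(2) by simp
        next
          case (Cons f ws')
          then show ?thesis using ins2[of Us "ws' @ [e, flip e] @ v"] u \<open>us = s' # us'\<close> s' ws by simp
        qed
      next
        assume "\<exists>ws. us' @ ws = M \<and> v = ws @ flip s # V"
        then obtain ws where ws: "us' @ ws = M" "v = ws @ flip s # V" by blast
        show ?thesis using ins[of "us' @ [e, flip e] @ ws"] u Cons s' ws h assms(2) by auto
      qed
    qed
  next
    assume "\<exists>us. u @ us = Us \<and> v = us @ s # M @ flip s # V"
    then obtain us where "u @ us = Us" "v = us @ s # M @ flip s # V" by blast
    then show ?thesis using ins2[of "u @ [e, flip e] @ us" V] by simp
  qed
qed

lemma nseg_rotate: "nseg (rotate k l) = nseg l"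
proof -
  let ?m = "k mod length l"
  have "length (filter isseg l) = length (filter isseg (take ?m l)) + length (filter isseg (drop ?m l))"
    by (metis append_take_drop_id filter_append length_append)
  then show ?thesis unfolding nseg_def rotate_drop_take[of k l] by simp
qed

lemma PP_step:
  assumes "PP l" "cstep l l'"
  shows "PP l' \<and> nseg l' = nseg l"
proof -
  obtain k e where h: "rotate k l = e # flip e # l'" using assms(2) cstep_def by auto
  have ne: "\<not> isseg e"
  proof
    assume "isseg e"
    moreover have "rotate k l = [] @ [e] @ [] @ [flip e] @ l'" using h by simp
    ultimately have "bad (rotate k l)" unfolding bad_def by fastforce
    then show False using assms(1) PP_def by blast
  qed
  have "PP l'" unfolding PP_def
  proof
    fix j
    define m where "m = j mod length l'"
    have r: "rotate j l' = drop m l' @ take m l'" unfolding m_def by (rule rotate_drop_take)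
    have "rotate (length (e # flip e # take m l')) (rotate k l) = drop m l' @ e # flip e # take m l'"
      unfolding h using rotate_append[of "e # flip e # take m l'" "drop m l'"] by simp
    then have "\<not> bad (drop m l' @ [e, flip e] @ take m l')" using assms(1) unfolding PP_def
      by (metis append_Cons append_Nil rotate_rotate)
    then show "\<not> bad (rotate j l')" unfolding r using bad_insert ne by blast
  qed
  moreover have "nseg l = nseg l'"
    using nseg_rotate[of k l] ne unfolding h nseg_def by simp
  ultimately show ?thesis by simp
qed

lemma PP_rtc: "cstep\<^sup>*\<^sup>* l n \<Longrightarrow> PP l \<Longrightarrow> PP n \<and> nseg n = nseg l"
  by (induction rule: rtranclp_induct) (use PP_step in auto)

fun scan :: "(dedge \<times> int) option \<Rightarrow> dedge list \<Rightarrow> bool" where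
  "scan st [] = True"
| "scan st (e # l) = (if isseg e then
      (case st of None \<Rightarrow> True | Some sn \<Rightarrow> \<not> (e = flip (fst sn) \<and> snd sn = 0)) \<and> scan (Some (e, 0)) l
    else scan (case st of None \<Rightarrow> None | Some sn \<Rightarrow> Some (fst sn, snd sn + sg e)) l)"

lemma scan_arcs: "\<forall>m\<in>set M. \<not> isseg m \<Longrightarrow>
   scan (Some (s, n)) (M @ r) = scan (Some (s, n + sum_list (map sg M))) r"
  by (induction M arbitrary: n) (auto simp: algebra_simps)

lemma scan_bad_aux: "scan st (Us @ [s] @ M @ [flip s] @ V) \<Longrightarrow> isseg s \<Longrightarrow>
   \<forall>m\<in>set M. \<not> isseg m \<Longrightarrow> sum_list (map sg M) = 0 \<Longrightarrow> False"
proof (induction Us arbitrary: st)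
  case Nil
  then have "scan (Some (s, 0)) (M @ flip s # V)" by simp
  then show ?case using Nil scan_arcs[of M s 0 "flip s # V"] by simp
next
  case (Cons u Us)
  from Cons.prems(1) obtain st' where "scan st' (Us @ [s] @ M @ [flip s] @ V)"
    by (auto split: if_splits)
  then show ?case using Cons by blast
qed

lemma scan_infix: "scan None (X @ xs @ Y) \<Longrightarrow> \<not> bad xs"
  unfolding bad_def using scan_bad_aux[of None "X @ _"] by fastforce



fun endpt :: "pt \<Rightarrow> letter list \<Rightarrow> pt" where
  "endpt p [] = p"
| "endpt p (x # w) = endpt (if snd x then padd p (disp (fst x)) else psub p (disp (fst x))) w"

lemma lift_from_append: "lift_from p (u @ v) = lift_from p u @ lift_from (endpt p u) v"
  by (induction u arbitrary: p) auto

lemmas ldefs = trans_path_def inv_path_def flip_def padd_def psub_def dtail_def dhead_def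

lemma lift_cons_nonempty: "lift_from p (x # v) \<noteq> []"
  by (cases x; cases "fst x") (auto simp: trans_path_def inv_path_def)

lemma lift_hd: "dtail (hd (lift_from p (x # v))) = (p, D)"
  by (cases x; cases "fst x"; cases "snd x") (auto simp: ldefs)

lemma lift_last: "v \<noteq> [] \<Longrightarrow> dhead (last (lift_from p v)) = (endpt p v, D)"
proof (induction v arbitrary: p)
  case Nil then show ?case by simp
next
  case (Cons x v)
  show ?case
  proof (cases "v = []")
    case True
    then show ?thesis by (cases x; cases "fst x"; cases "snd x") (auto simp: ldefs)
  next
    case False
    then obtain y v' where v: "v = y # v'" by (cases v) auto
    have ne: "lift_from q v \<noteq> []" for q using lift_cons_nonempty v by simp
    show ?thesis using Cons.IH[OF False] ne by (simp add: last_append)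
  qed
qed

lemma nseg_lift: "nseg (lift_from p v) = ell v"
proof (induction v arbitrary: p)
  case Nil then show ?case by (simp add: nseg_def ell_def)
next
  case (Cons x v)
  then show ?case
    by (cases x; cases "fst x"; cases "snd x") (auto simp: ldefs nseg_def ell_def isseg_def)
qed

fun redw :: "letter list \<Rightarrow> bool" where
  "redw [] = True"
| "redw [x] = True"
| "redw (x # y # r) = (y \<noteq> inv_letter x \<and> redw (y # r))"

lemma reduced_cons2: "reduced (x # y # r) = (y \<noteq> inv_letter x \<and> reduced (y # r))"
  unfolding reduced_def
  apply (rule iffI)
   apply (intro conjI)
    apply (metis Suc_less_eq length_Cons nth_Cons_0 nth_Cons_Suc zero_less_Suc)
   apply (metis Suc_less_eq length_Cons nth_Cons_Suc)
  apply clarify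
  apply (case_tac i)
   apply simp
  apply simp
  done

lemma reduced_redw: "reduced w = redw w"
  by (induction w rule: redw.induct) (auto simp: reduced_cons2, auto simp: reduced_def)

lemma redw_append: "redw u \<Longrightarrow> redw v \<Longrightarrow> (u \<noteq> [] \<longrightarrow> v \<noteq> [] \<longrightarrow> hd v \<noteq> inv_letter (last u)) \<Longrightarrow> redw (u @ v)"
proof (induction u rule: redw.induct)
  case 1 then show ?case by simp
next
  case (2 x) then show ?case by (cases v) auto
next
  case (3 x y r) then show ?case by auto
qed



definition stepp :: "pt \<Rightarrow> letter \<Rightarrow> pt" where
  "stepp p x = (if snd x then padd p (disp (fst x)) else psub p (disp (fst x)))"

fun segat :: "letter \<Rightarrow> pt \<Rightarrow> dedge" where
  "segat (A, True) p = (VSeg p, True)"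
| "segat (A, False) p = (VSeg (psub p (0,1)), False)"
| "segat (B, True) p = (HSeg p, True)"
| "segat (B, False) p = (HSeg (psub p (1,0)), False)"
| "segat (C, b) p = (VSeg p, True)"

fun headnet :: "letter \<Rightarrow> int" where
  "headnet (A, True) = -2" | "headnet (A, False) = 0" | "headnet (B, True) = 1"
| "headnet (B, False) = -1" | "headnet (C, b) = 0"

fun tailnet :: "letter \<Rightarrow> int" where
  "tailnet (A, True) = 0" | "tailnet (A, False) = 2" | "tailnet (B, True) = 1"
| "tailnet (B, False) = -1" | "tailnet (C, b) = 0"

definition stadd :: "(dedge \<times> int) option \<Rightarrow> int \<Rightarrow> (dedge \<times> int) option" where
  "stadd st d = (case st of None \<Rightarrow> None | Some sn \<Rightarrow> Some (fst sn, snd sn + d))"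

lemma scan_C: "scan st (lift_from p ((C, b) # v)) = scan (stadd st (if b then 4 else -4)) (lift_from p v)"
  by (cases st; cases b) (auto simp: ldefs isseg_def sg_def stadd_def add.commute)

lemma scan_nonC:
  assumes "fst x \<noteq> C"
  shows "scan st (lift_from p (x # v)) =
    ((case st of None \<Rightarrow> True | Some sn \<Rightarrow> \<not> (segat x p = flip (fst sn) \<and> snd sn + headnet x = 0)) \<and>
     scan (Some (segat x p, tailnet x)) (lift_from (stepp p x) v))"
  using assms
  by (cases x; cases "fst x"; cases "snd x"; cases st) (auto simp: ldefs isseg_def sg_def stepp_def)

lemma seg_match:
  assumes "fst y \<noteq> C" "fst x \<noteq> C" "segat x (stepp q y) = flip (segat y q)"
  shows "x = inv_letter y \<and> tailnet y + headnet x = 0"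
  using assms
  by (cases x; cases y; cases "fst x"; cases "snd x"; cases "fst y"; cases "snd y")
     (auto simp: ldefs stepp_def inv_letter_def)

definition goodst :: "(dedge \<times> int) option \<Rightarrow> pt \<Rightarrow> letter list \<Rightarrow> bool" where
  "goodst st p v \<longleftrightarrow> st = None \<or> (\<exists>y q k. fst y \<noteq> C \<and> p = stepp q y \<and>
     st = Some (segat y q, tailnet y + 4 * k) \<and>
     (v \<noteq> [] \<longrightarrow> (k = 0 \<longrightarrow> hd v \<noteq> inv_letter y) \<and> (k > 0 \<longrightarrow> hd v \<noteq> (C, False)) \<and>
        (k < 0 \<longrightarrow> hd v \<noteq> (C, True))))"

lemma redw_tl: "redw (x # v) \<Longrightarrow> redw v \<and> (v \<noteq> [] \<longrightarrow> hd v \<noteq> inv_letter x)"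
  by (cases v) auto

lemma scan_lift: "redw v \<Longrightarrow> goodst st p v \<Longrightarrow> scan st (lift_from p v)"
proof (induction v arbitrary: st p)
  case Nil then show ?case by simp
next
  case (Cons x v)
  have rv: "redw v" and hv: "v \<noteq> [] \<Longrightarrow> hd v \<noteq> inv_letter x" using redw_tl[OF Cons.prems(1)] by auto
  obtain g b where x: "x = (g, b)" by (cases x)
  show ?case
  proof (cases "g = C")
    case True
    have "goodst (stadd st (if b then 4 else -4)) p v"
    proof (cases "st = None")
      case True then show ?thesis by (simp add: goodst_def stadd_def)
    next
      case False
      then obtain y q k where yk: "fst y \<noteq> C" "p = stepp q y" "st = Some (segat y q, tailnet y + 4 * k)"
        "(k = 0 \<longrightarrow> x \<noteq> inv_letter y) \<and> (k > 0 \<longrightarrow> x \<noteq> (C, False)) \<and> (k < 0 \<longrightarrow> x \<noteq> (C, True))"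
        using Cons.prems(2) unfolding goodst_def by auto
      show ?thesis
      proof (cases b)
        case bT: True
        have "k \<ge> 0" using yk(4) x True bT by force
        then show ?thesis unfolding goodst_def stadd_def
          using yk hv x True bT
          by (intro disjI2 exI[of _ y] exI[of _ q] exI[of _ "k + 1"]) (auto simp: inv_letter_def algebra_simps)
      next
        case bF: False
        have "k \<le> 0" using yk(4) x True bF by force
        then show ?thesis unfolding goodst_def stadd_def
          using yk hv x True bF
          by (intro disjI2 exI[of _ y] exI[of _ q] exI[of _ "k - 1"]) (auto simp: inv_letter_def algebra_simps)
      qed
    qed
    then show ?thesis using Cons.IH[OF rv] scan_C x True by simp
  next
    case False
    then have nc: "fst x \<noteq> C" using x by simp
    have g2: "goodst (Some (segat x p, tailnet x)) (stepp p x) v"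
      unfolding goodst_def using nc hv
      by (intro disjI2 exI[of _ x] exI[of _ p] exI[of _ 0]) auto
    have chk: "case st of None \<Rightarrow> True | Some sn \<Rightarrow> \<not> (segat x p = flip (fst sn) \<and> snd sn + headnet x = 0)"
    proof (cases "st = None")
      case True then show ?thesis by simp
    next
      case False
      then obtain y q k where yk: "fst y \<noteq> C" "p = stepp q y" "st = Some (segat y q, tailnet y + 4 * k)"
        "(k = 0 \<longrightarrow> x \<noteq> inv_letter y)"
        using Cons.prems(2) unfolding goodst_def by auto
      show ?thesis
      proof (clarsimp simp: yk(3))
        assume a: "segat x p = flip (segat y q)" "tailnet y + 4 * k + headnet x = 0"
        then have "x = inv_letter y \<and> tailnet y + headnet x = 0" using seg_match yk nc by blast
        then show False using a(2) yk(4) by auto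
      qed
    qed
    show ?thesis using scan_nonC[OF nc] chk Cons.IH[OF rv g2] by simp
  qed
qed



lemma geom_irred: assumes "geom_irreducible g" shows "irred g"
  unfolding irred_def cstep_def
proof clarify
  fix l' k e assume h: "rotate k g = e # flip e # l'"
  define n where "n = length g"
  have n2: "n \<ge> 2" using arg_cong[OF h, of length] n_def by simp
  have e0: "g ! (k mod n) = e" using nth_rotate[of 0 g k] h n2 n_def by force
  have e1: "g ! (Suc k mod n) = flip e" using nth_rotate[of 1 g k] h n2 n_def by simp
  have sm: "Suc k mod n = Suc (k mod n) mod n" by (simp add: mod_Suc_eq)
  show False
  proof (cases "Suc (k mod n) < n")
    case True
    then have "g ! Suc (k mod n) = flip (g ! (k mod n))" using e0 e1 sm by simp
    then show False using assms True n_def unfolding geom_irreducible_def by blast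
  next
    case False
    have lt: "k mod n < n" using n2 by simp
    then have kn: "k mod n = n - 1" using False by linarith
    then have "Suc (k mod n) mod n = 0" using n2 by simp
    then have "hd g = flip e" using e1 sm n2 n_def by (metis hd_conv_nth list.size(3) not_numeral_le_zero)
    moreover have "last g = e" using e0 kn n2 n_def by (metis last_conv_nth list.size(3) not_numeral_le_zero)
    ultimately show False using assms n2 n_def unfolding geom_irreducible_def by auto
  qed
qed

lemma path_len_bound:
  assumes "0 < eps" shows "(1 - 2 * eps) * real (nseg g) \<le> path_len eps g"
proof (induction g)
  case Nil then show ?case by (simp add: nseg_def path_len_def)
next
  case (Cons e g)
  have "(if isseg e then 1 - 2 * eps else 0) \<le> elen eps (fst e)"
    using assms by (cases "fst e") (auto simp: isseg_def)
  then show ?case using Cons by (auto simp: nseg_def path_len_def algebra_simps split: if_splits)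
qed

lemma PP_lift:
  assumes "cyc_reduced w" "closed_edge_path (lift w)"
  shows "PP (lift w)"
proof -
  have ep: "endpt (0,0) w = (0,0)"
  proof (cases w)
    case Nil then show ?thesis by simp
  next
    case (Cons x v)
    have "dhead (last (lift w)) = dtail (hd (lift w))"
      using assms(2) lift_cons_nonempty Cons unfolding closed_edge_path_def lift_def by blast
    then show ?thesis using lift_last[of w "(0,0)"] lift_hd Cons unfolding lift_def by simp
  qed
  have rw: "redw (w @ w)"
    using assms(1) redw_append reduced_redw unfolding cyc_reduced_def by metis
  have ll: "lift w @ lift w = lift_from (0,0) (w @ w)"
    unfolding lift_def lift_from_append ep by simp
  have sc: "scan None (lift w @ lift w)" unfolding ll
    by (rule scan_lift[OF rw]) (simp add: goodst_def)
  show ?thesis unfolding PP_def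
  proof
    fix k
    define m where "m = k mod length (lift w)"
    have "lift w @ lift w = take m (lift w) @ (drop m (lift w) @ take m (lift w)) @ drop m (lift w)"
      by (metis append.assoc append_take_drop_id)
    then show "\<not> bad (rotate k (lift w))"
      using sc scan_infix rotate_drop_take[of k "lift w"] m_def by metis
  qed
qed

theorem lemma2p2:
  fixes eps :: real and w :: "letter list" and \<gamma> :: "dedge list"
  assumes "0 < eps" and "eps < 0.1"
    and "w \<in> N" and "cyc_reduced w"
    and "closed_edge_path \<gamma>" and "geom_irreducible \<gamma>"
    and "freely_homotopic \<gamma> (lift w)"
  shows "real (ell w) \<le> inverse (1 - 2 * eps) * path_len eps \<gamma>"
proof -
  have cl: "closed_edge_path (lift w)" and hr: "(\<lambda>x y. fh_step x y \<or> fh_step y x)\<^sup>*\<^sup>* \<gamma> (lift w)"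
    using assms(7) unfolding freely_homotopic_def by auto
  obtain n where n: "cstep\<^sup>*\<^sup>* (lift w) n" "rot n \<gamma>"
    using fh_nf[OF hr geom_irred[OF assms(6)]] by blast
  have "nseg n = nseg (lift w)" using PP_rtc[OF n(1) PP_lift[OF assms(4) cl]] by simp
  also have "\<dots> = ell w" unfolding lift_def by (rule nseg_lift)
  finally have "nseg \<gamma> = ell w" using n(2) nseg_rotate unfolding rot_def by metis
  then have b: "(1 - 2 * eps) * real (ell w) \<le> path_len eps \<gamma>" using path_len_bound[OF assms(1)] by metis
  have pos: "0 < 1 - 2 * eps" using assms(2) by simp
  have "real (ell w) = inverse (1 - 2 * eps) * ((1 - 2 * eps) * real (ell w))" using pos by simp
  also have "\<dots> \<le> inverse (1 - 2 * eps) * path_len eps \<gamma>" using b pos by (simp add: mult_left_mono)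
  finally show ?thesis .
qed

end
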